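(* Let $\mathbb{Q}$ be the field of rational numbers with the discrete topology, and let $a_2,a_3,b_2,b_3$ be nonzero rational numbers. Let $\xi_1,\xi_2,\xi_3,\xi_4$ be independent $\mathbb{Q}$-valued random variables with nowhere-vanishing characteristic functions, and put $L_1=\xi_1+a_2\xi_2+a_3\xi_3$, $L_2=b_2\xi_2+b_3\xi_3+\xi_4$. For independent $\mathbb{Q}$-valued random variables $\eta_1,\dots,\eta_4$ with nowhere-vanishing characteristic functions put $M_1=\eta_1+a_2\eta_2+a_3\eta_3$, $M_2=b_2\eta_2+b_3\eta_3+\eta_4$. (I) If $a_2b_3\neq a_3b_2$, then for every such $\eta_1,\dots,\eta_4$ with $(M_1,M_2)$ equal in distribution to $(L_1,L_2)$, there exist $\alpha_1,\dots,\alpha_4\in\mathbb{Q}$ such that $\eta_j$ has the same distribution as $\xi_j+\alpha_j$ for $j=1,\dots,4$. (II)/(III) If $a_2b_3=a_3b_2$, $\xi_2$ and $\xi_3$ are identically distributed, and either $|a_2|\neq|a_3|$ or $a_2=a_3$, then for every such $\eta_1,\dots,\eta_4$ with $\eta_2,\eta_3$ identically distributed and $(M_1,M_2)$ equal in distribution to $(L_1,L_2)$, there exist $\alpha_1,\dots,\alpha_4\in\mathbb{Q}$ such that $\eta_j$ has the same distribution as $\xi_j+\alpha_j$ for $j=1,\dots,4$.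
   Context: The character group of the discrete additive group $\mathbb{Q}$ is the compact $\boldsymbol a$-adic solenoid $\Sigma_{\boldsymbol a}$ with $\boldsymbol a=(2,3,4,\dots)$; write $(x,y)$ for the value of the character $y\in\Sigma_{\boldsymbol a}$ at $x\in\mathbb{Q}$. The characteristic function of a $\mathbb{Q}$-valued random variable $\xi$ is $y\mapsto\mathbf{E}[(\xi,y)]$, $y\in\Sigma_{\boldsymbol a}$; "nowhere-vanishing" means it is nonzero at every $y\in\Sigma_{\boldsymbol a}$. *)

theory Defs
  imports "HOL-Probability.Probability"
begin

text \<open>Characters of the discrete group Q (= points of the a-adic solenoid
  Sigma_a): homomorphisms from (Q,+) to the unit circle.\<close>
definition rat_character :: "(rat \<Rightarrow> complex) \<Rightarrow> bool" where
  "rat_character y \<longleftrightarrow> (\<forall>x x'. y (x + x') = y x * y x') \<and> (\<forall>x. norm (y x) = 1)"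

definition char_fun_rat :: "'a measure \<Rightarrow> ('a \<Rightarrow> rat) \<Rightarrow> (rat \<Rightarrow> complex) \<Rightarrow> complex" where
  "char_fun_rat M X y = (\<integral>\<omega>. y (X \<omega>) \<partial>M)"

definition nowhere_vanishing_cf :: "'a measure \<Rightarrow> ('a \<Rightarrow> rat) \<Rightarrow> bool" where
  "nowhere_vanishing_cf M X \<longleftrightarrow> (\<forall>y. rat_character y \<longrightarrow> char_fun_rat M X y \<noteq> 0)"

definition admissible4 :: "'a measure \<Rightarrow> (nat \<Rightarrow> 'a \<Rightarrow> rat) \<Rightarrow> bool" where
  "admissible4 M X \<longleftrightarrow> prob_space M \<and>
     prob_space.indep_vars M (\<lambda>_. count_space UNIV) X {1..4} \<and>
     (\<forall>j\<in>{1..4}. nowhere_vanishing_cf M (X j))"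

end

theory Submission
  imports Defs "HOL-Analysis.Analysis"
begin

lemma cube_abstract:
  fixes G1 G2 G3 G4 :: "'v::ab_group_add \<Rightarrow> complex"
  assumes eq: "\<And>v. G1 v * G2 v * G3 v * G4 v = 1"
    and i2: "\<And>v. G2 (v + d2) = G2 v" and i3: "\<And>v. G3 (v + d3) = G3 v" and i4: "\<And>v. G4 (v + d4) = G4 v"
  shows "G1 (d2+d3+d4) * G1 d2 * G1 d3 * G1 d4 = G1 (d2+d3) * G1 (d2+d4) * G1 (d3+d4) * G1 0"
proof -
  have nz: "G1 v \<noteq> 0" "G2 v \<noteq> 0" "G3 v \<noteq> 0" "G4 v \<noteq> 0" for v
    using eq[of v] by auto
  have a2: "G2 (d2+d3+d4) = G2 (d3+d4)" "G2 d2 = G2 0" "G2 (d2+d3) = G2 d3" "G2 (d2+d4) = G2 d4"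
    using i2[of "d3+d4"] i2[of 0] i2[of d3] i2[of d4] by (simp_all add: ac_simps)
  have a3: "G3 (d2+d3+d4) = G3 (d2+d4)" "G3 d3 = G3 0" "G3 (d2+d3) = G3 d2" "G3 (d3+d4) = G3 d4"
    using i3[of "d2+d4"] i3[of 0] i3[of d2] i3[of d4] by (simp_all add: ac_simps)
  have a4: "G4 (d2+d3+d4) = G4 (d2+d3)" "G4 d4 = G4 0" "G4 (d2+d4) = G4 d2" "G4 (d3+d4) = G4 d3"
    using i4[of "d2+d3"] i4[of 0] i4[of d2] i4[of d3] by (simp_all add: ac_simps)
  define P where "P = (\<lambda>v. G2 v * G3 v * G4 v)"
  have G1e: "G1 v * P v = 1" for v using eq[of v] unfolding P_def
    by (simp add: ac_simps)
  have Pnz: "P v \<noteq> 0" for v using G1e[of v] by auto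
  have PP: "P (d2+d3+d4) * P d2 * P d3 * P d4 = P (d2+d3) * P (d2+d4) * P (d3+d4) * P 0"
    unfolding P_def a2 a3 a4 by (simp add: ac_simps)
  have "(G1 (d2+d3+d4) * G1 d2 * G1 d3 * G1 d4) * (P (d2+d3+d4) * P d2 * P d3 * P d4) =
        (G1 (d2+d3+d4) * P (d2+d3+d4)) * (G1 d2 * P d2) * (G1 d3 * P d3) * (G1 d4 * P d4)"
    by (simp add: ac_simps)
  also have "\<dots> = (G1 (d2+d3) * P (d2+d3)) * (G1 (d2+d4) * P (d2+d4)) * (G1 (d3+d4) * P (d3+d4)) * (G1 0 * P 0)"
    by (simp only: G1e)
  also have "\<dots> = (G1 (d2+d3) * G1 (d2+d4) * G1 (d3+d4) * G1 0) * (P (d2+d3+d4) * P d2 * P d3 * P d4)"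
    unfolding PP by (simp add: ac_simps)
  finally show ?thesis using Pnz by (metis mult_cancel_right mult_eq_0_iff)
qed

lemma square_abstract:
  fixes G1 G2 G3 :: "'v::ab_group_add \<Rightarrow> complex"
  assumes eq: "\<And>v. G1 v * G2 v * G3 v = 1"
    and i2: "\<And>v. G2 (v + d2) = G2 v" and i3: "\<And>v. G3 (v + d3) = G3 v"
  shows "G1 (d2+d3) * G1 0 = G1 d2 * G1 d3"
proof -
  have nz: "G1 v \<noteq> 0" "G2 v \<noteq> 0" "G3 v \<noteq> 0" for v
    using eq[of v] by auto
  have a2: "G2 (d2+d3) = G2 d3" "G2 d2 = G2 0"
    using i2[of d3] i2[of 0] by (simp_all add: ac_simps)
  have a3: "G3 (d2+d3) = G3 d2" "G3 d3 = G3 0"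
    using i3[of d2] i3[of 0] by (simp_all add: ac_simps)
  define P where "P = (\<lambda>v. G2 v * G3 v)"
  have G1e: "G1 v * P v = 1" for v using eq[of v] unfolding P_def
    by (simp add: ac_simps)
  have Pnz: "P v \<noteq> 0" for v using G1e[of v] by auto
  have PP: "P (d2+d3) * P 0 = P d2 * P d3"
    unfolding P_def a2 a3 by (simp add: ac_simps)
  have "(G1 (d2+d3) * G1 0) * (P (d2+d3) * P 0) = (G1 (d2+d3) * P (d2+d3)) * (G1 0 * P 0)"
    by (simp add: ac_simps)
  also have "\<dots> = (G1 d2 * P d2) * (G1 d3 * P d3)" by (simp only: G1e)
  also have "\<dots> = (G1 d2 * G1 d3) * (P (d2+d3) * P 0)" unfolding PP by (simp add: ac_simps)
  finally show ?thesis using Pnz by (metis mult_cancel_right mult_eq_0_iff)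
qed

lemma lin_aux:
  fixes p1 q1 p2 q2 k :: real
  assumes "p1*q2 - p2*q1 \<noteq> 0"
  shows "p1 * (k*q2/(p1*q2 - p2*q1)) + q1 * (- k*p2/(p1*q2 - p2*q1)) = k"
proof -
  define D where "D = p1*q2 - p2*q1"
  have "p1 * (k*q2/D) + q1 * (- k*p2/D) = k * D / D" unfolding D_def by (simp add: algebra_simps diff_divide_distrib add_divide_distrib)
  then show ?thesis using assms unfolding D_def by simp
qed

lemma cube_lin:
  fixes H1 H2 H3 H4 :: "real \<Rightarrow> complex" and p1 q1 p2 q2 p3 q3 p4 q4 :: real
  assumes eq: "\<And>x y. H1 (p1*x + q1*y) * H2 (p2*x + q2*y) * H3 (p3*x + q3*y) * H4 (p4*x + q4*y) = 1"
    and d2: "p1*q2 - p2*q1 \<noteq> 0" and d3: "p1*q3 - p3*q1 \<noteq> 0" and d4: "p1*q4 - p4*q1 \<noteq> 0"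
  shows "H1 (k+l+m) * H1 k * H1 l * H1 m = H1 (k+l) * H1 (k+m) * H1 (l+m) * H1 0"
proof -
  define L where "L = (\<lambda>p q (v::real\<times>real). p * fst v + q * snd v)"
  have Ladd: "L p q (v + w) = L p q v + L p q w" for p q v w
    unfolding L_def by (simp add: algebra_simps)
  define e2 where "e2 = (k*q2/(p1*q2 - p2*q1), - k*p2/(p1*q2 - p2*q1))"
  define e3 where "e3 = (l*q3/(p1*q3 - p3*q1), - l*p3/(p1*q3 - p3*q1))"
  define e4 where "e4 = (m*q4/(p1*q4 - p4*q1), - m*p4/(p1*q4 - p4*q1))"
  have z2: "L p2 q2 e2 = 0" and z3: "L p3 q3 e3 = 0" and z4: "L p4 q4 e4 = 0"
    unfolding L_def e2_def e3_def e4_def by (simp_all add: field_simps)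
  have o2: "L p1 q1 e2 = k" and o3: "L p1 q1 e3 = l" and o4: "L p1 q1 e4 = m"
    using lin_aux[OF d2] lin_aux[OF d3] lin_aux[OF d4] unfolding L_def e2_def e3_def e4_def by simp_all
  have o0: "L p1 q1 0 = 0" unfolding L_def by simp
  have "(\<lambda>v. H1 (L p1 q1 v)) (e2+e3+e4) * (\<lambda>v. H1 (L p1 q1 v)) e2 * (\<lambda>v. H1 (L p1 q1 v)) e3 * (\<lambda>v. H1 (L p1 q1 v)) e4
      = (\<lambda>v. H1 (L p1 q1 v)) (e2+e3) * (\<lambda>v. H1 (L p1 q1 v)) (e2+e4) * (\<lambda>v. H1 (L p1 q1 v)) (e3+e4) * (\<lambda>v. H1 (L p1 q1 v)) 0"
    apply (rule cube_abstract[of "\<lambda>v. H1 (L p1 q1 v)" "\<lambda>v. H2 (L p2 q2 v)" "\<lambda>v. H3 (L p3 q3 v)" "\<lambda>v. H4 (L p4 q4 v)"])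
    subgoal for v using eq[of "fst v" "snd v"] unfolding L_def by simp
    by (simp_all add: Ladd z2 z3 z4)
  then show ?thesis by (simp add: Ladd o2 o3 o4 o0)
qed

lemma square_lin:
  fixes H1 H2 H3 :: "real \<Rightarrow> complex" and p1 q1 p2 q2 p3 q3 :: real
  assumes eq: "\<And>x y. H1 (p1*x + q1*y) * H2 (p2*x + q2*y) * H3 (p3*x + q3*y) = 1"
    and d2: "p1*q2 - p2*q1 \<noteq> 0" and d3: "p1*q3 - p3*q1 \<noteq> 0"
  shows "H1 (k+l) * H1 0 = H1 k * H1 l"
proof -
  define L where "L = (\<lambda>p q (v::real\<times>real). p * fst v + q * snd v)"
  have Ladd: "L p q (v + w) = L p q v + L p q w" for p q v w
    unfolding L_def by (simp add: algebra_simps)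
  define e2 where "e2 = (k*q2/(p1*q2 - p2*q1), - k*p2/(p1*q2 - p2*q1))"
  define e3 where "e3 = (l*q3/(p1*q3 - p3*q1), - l*p3/(p1*q3 - p3*q1))"
  have z2: "L p2 q2 e2 = 0" and z3: "L p3 q3 e3 = 0"
    unfolding L_def e2_def e3_def by (simp_all add: field_simps)
  have o2: "L p1 q1 e2 = k" and o3: "L p1 q1 e3 = l"
    using lin_aux[OF d2] lin_aux[OF d3] unfolding L_def e2_def e3_def by simp_all
  have o0: "L p1 q1 0 = 0" unfolding L_def by simp
  have "(\<lambda>v. H1 (L p1 q1 v)) (e2+e3) * (\<lambda>v. H1 (L p1 q1 v)) 0
      = (\<lambda>v. H1 (L p1 q1 v)) e2 * (\<lambda>v. H1 (L p1 q1 v)) e3"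
    apply (rule square_abstract[of "\<lambda>v. H1 (L p1 q1 v)" "\<lambda>v. H2 (L p2 q2 v)" "\<lambda>v. H3 (L p3 q3 v)"])
    subgoal for v using eq[of "fst v" "snd v"] unfolding L_def by simp
    by (simp_all add: Ladd z2 z3)
  then show ?thesis by (simp add: Ladd o2 o3 o0)
qed



lemma additive_cont_linear:
  fixes \<phi> :: "real \<Rightarrow> complex"
  assumes cont: "continuous_on UNIV \<phi>" and add: "\<And>x y. \<phi> (x+y) = \<phi> x + \<phi> y"
  shows "\<phi> t = of_real t * \<phi> 1"
proof -
  have z: "\<phi> 0 = 0" using add[of 0 0] by simp
  have neg: "\<phi> (-x) = - \<phi> x" for x proof - have "\<phi> x + \<phi> (-x) = 0" using add[of x "-x"] z by simp then show ?thesis by (metis add.commute eq_neg_iff_add_eq_0) qed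
  have natm: "\<phi> (of_nat n * x) = of_nat n * \<phi> x" for n x
    by (induction n) (simp_all add: z add distrib_right)
  have intm: "\<phi> (of_int n * x) = of_int n * \<phi> x" for n x
  proof (cases "n \<ge> 0")
    case True then show ?thesis using natm[of "nat n" x] by simp
  next
    case False
    then have "of_int n * x = - (of_nat (nat (-n)) * x)" by simp
    then show ?thesis using False neg natm[of "nat (-n)" x] by simp
  qed
  define \<psi> where "\<psi> = (\<lambda>t. \<phi> t - of_real t * \<phi> 1)"
  have "\<psi> r = 0" if rQ: "r \<in> \<rat>" for r
  proof -
    obtain a b where ab: "b > 0" "r = of_int a / of_int b" using Rats_cases'[OF rQ] by metis
    have "of_int b * \<phi> r = \<phi> (of_int b * r)" by (simp add: intm)
    also have "of_int b * r = of_int a * 1" using ab by simp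
    finally have "of_int b * \<phi> r = of_int a * \<phi> 1" by (simp only: intm)
    then have "\<phi> r = of_int a / of_int b * \<phi> 1" using ab(1) by (simp add: field_simps)
    then show ?thesis unfolding \<psi>_def ab(2) by simp
  qed
  moreover have "continuous_on (closure \<rat>) \<psi>" unfolding \<psi>_def
    by (intro continuous_intros continuous_on_subset[OF cont]) auto
  ultimately have "\<psi> t = 0" using continuous_constant_on_closure[of \<rat> \<psi> 0 t] Rats_closure_real by auto
  then show ?thesis unfolding \<psi>_def by simp
qed

lemma cont_hom_exp:
  fixes h :: "real \<Rightarrow> complex"
  assumes cont: "continuous_on UNIV h" and hom: "\<And>x y. h (x+y) = h x * h y" and h0: "h 0 \<noteq> 0"
  obtains c where "\<And>t. h t = exp (c * of_real t)"
proof -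
  have h01: "h 0 = 1" using hom[of 0 0] h0 by simp
  have hnz: "h x \<noteq> 0" for x using hom[of x "-x"] h01 by auto
  have ctr: "contractible (UNIV::real set)" by (rule convex_imp_contractible[OF convex_UNIV])
  obtain g where gc: "continuous_on UNIV g" and hg0: "\<And>x. x \<in> UNIV \<Longrightarrow> h x = exp (g x)"
    by (rule continuous_logarithm_on_contractible[OF cont ctr hnz]) blast
  have hg: "h x = exp (g x)" for x using hg0 by simp
  define D where "D = (\<lambda>p::real\<times>real. g (fst p + snd p) - g (fst p) - g (snd p))"
  have Dint: "\<exists>n::int. D p = of_int n * (2 * pi) * \<i>" for p
  proof -
    have "exp (D p) = 1" unfolding D_def
      using hom[of "fst p" "snd p"] hnz by (simp add: exp_diff hg[symmetric])
    then obtain n::int where "Re (D p) = 0" "Im (D p) = of_int (2*n) * pi" unfolding exp_eq_1 by blast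
    then have "D p = of_int n * (2*pi) * \<i>" by (simp add: complex_eq_iff)
    then show ?thesis by blast
  qed
  have c1: "continuous_on UNIV (\<lambda>p::real\<times>real. g (fst p + snd p))"
    by (rule continuous_on_compose2[OF gc]) (intro continuous_intros, simp)
  have c2: "continuous_on UNIV (\<lambda>p::real\<times>real. g (fst p))"
    by (rule continuous_on_compose2[OF gc]) (intro continuous_intros, simp)
  have c3: "continuous_on UNIV (\<lambda>p::real\<times>real. g (snd p))"
    by (rule continuous_on_compose2[OF gc]) (intro continuous_intros, simp)
  have Dc: "continuous_on UNIV D" unfolding D_def
    by (intro continuous_on_diff c1 c2 c3)
  have "D constant_on UNIV"
  proof (rule continuous_discrete_range_constant[OF connected_UNIV Dc])
    fix x :: "real \<times> real"
    show "\<exists>e>0. \<forall>y. y \<in> UNIV \<and> D y \<noteq> D x \<longrightarrow> e \<le> norm (D y - D x)"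
    proof (intro exI[of _ "2*pi"] conjI allI impI)
      fix y assume "y \<in> UNIV \<and> D y \<noteq> D x"
      then have ne: "D y \<noteq> D x" by simp
      obtain n m :: int where n: "D x = of_int n * (2 * pi) * \<i>" and m: "D y = of_int m * (2 * pi) * \<i>"
        using Dint by metis
      have "m \<noteq> n" using ne n m by auto
      then have "1 \<le> \<bar>of_int m - of_int n :: real\<bar>" by linarith
      have "D y - D x = of_real ((of_int m - of_int n) * (2*pi)) * \<i>" using n m by (simp add: algebra_simps)
      then have "norm (D y - D x) = \<bar>(of_int m - of_int n) * (2*pi)\<bar>" by (simp only: norm_mult norm_of_real norm_ii mult_1_right)
      then have "norm (D y - D x) = \<bar>of_int m - of_int n\<bar> * (2*pi)" by (simp add: abs_mult)
      then show "2*pi \<le> norm (D y - D x)" using \<open>1 \<le> _\<close> by (simp add: mult_le_cancel_right1)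
    qed simp
  qed
  then obtain c0 where c0: "\<And>p. D p = c0" unfolding constant_on_def by auto
  have "c0 = - g 0" using c0[of "(0,0)"] unfolding D_def by simp
  define \<phi> where "\<phi> = (\<lambda>x. g x - g 0)"
  have add: "\<phi> (x+y) = \<phi> x + \<phi> y" for x y using c0[of "(x,y)"] \<open>c0 = - g 0\<close> unfolding D_def \<phi>_def by (simp add: algebra_simps)
  have pc: "continuous_on UNIV \<phi>" unfolding \<phi>_def by (intro continuous_intros gc)
  have "h t = exp (\<phi> t)" for t
  proof -
    have "exp (\<phi> t) = h t / h 0" unfolding \<phi>_def by (simp add: exp_diff hg)
    then show ?thesis using h01 by simp
  qed
  then have "h t = exp (\<phi> 1 * of_real t)" for t using additive_cont_linear[OF pc add, of t] by (simp add: mult.commute)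
  then show ?thesis using that by blast
qed



definition cfr :: "'a measure \<Rightarrow> ('a \<Rightarrow> rat) \<Rightarrow> real \<Rightarrow> complex" where
  "cfr M X t = (\<integral>\<omega>. iexp (t * real_of_rat (X \<omega>)) \<partial>M)"

lemma meas_rat_comp:
  assumes "X \<in> measurable M (count_space UNIV)"
  shows "(\<lambda>\<omega>. f (X \<omega>) :: 'b::topological_space) \<in> borel_measurable M"
  by (rule measurable_compose[OF assms]) simp

lemma integrable_bounded_rat:
  fixes f :: "rat \<Rightarrow> complex"
  assumes "prob_space M" "X \<in> measurable M (count_space UNIV)" "\<And>q. norm (f q) \<le> B"
  shows "integrable M (\<lambda>\<omega>. f (X \<omega>))"
proof -
  interpret prob_space M by fact
  show ?thesis by (rule integrable_const_bound[where B=B]) (use assms meas_rat_comp in auto)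
qed

lemma cfr_char:
  assumes "prob_space M" "X \<in> measurable M (count_space UNIV)"
  shows "cfr M X t = char (distr M borel (\<lambda>\<omega>. real_of_rat (X \<omega>))) t"
  unfolding cfr_def char_def by (subst integral_distr) (auto intro: meas_rat_comp[OF assms(2)])

lemma cfr_realdist:
  assumes "prob_space M" "X \<in> measurable M (count_space UNIV)"
  shows "real_distribution (distr M borel (\<lambda>\<omega>. real_of_rat (X \<omega>)))"
proof -
  interpret prob_space M by fact
  show ?thesis by (rule real_distribution_distr) (rule meas_rat_comp[OF assms(2)])
qed

lemma cfr_isCont:
  assumes "prob_space M" "X \<in> measurable M (count_space UNIV)"
  shows "isCont (cfr M X) t"
proof -
  have "cfr M X = char (distr M borel (\<lambda>\<omega>. real_of_rat (X \<omega>)))"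
    using cfr_char[OF assms] by auto
  then show ?thesis using real_distribution.isCont_char[OF cfr_realdist[OF assms]] by simp
qed

lemma cfr_0:
  assumes "prob_space M"
  shows "cfr M X 0 = 1"
  using assms unfolding cfr_def by (simp add: prob_space.prob_space)

lemma cfr_nz:
  assumes "nowhere_vanishing_cf M X"
  shows "cfr M X t \<noteq> 0"
proof -
  define y where "y = (\<lambda>x::rat. iexp (t * real_of_rat x))"
  have "rat_character y" unfolding rat_character_def y_def
    by (auto simp: of_rat_add distrib_left exp_add simp flip: exp_add)
  then have "char_fun_rat M X y \<noteq> 0" using assms unfolding nowhere_vanishing_cf_def by blast
  then show ?thesis unfolding char_fun_rat_def cfr_def y_def by simp
qed

lemma iexp_int: "iexp (2 * pi * of_int k) = 1"
  unfolding exp_eq_1 by simp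

lemma approx_periods:
  assumes "prob_space M" "X \<in> measurable M (count_space UNIV)"
  shows "(\<lambda>m. \<integral>\<omega>. norm (iexp (2*pi*fact m * real_of_rat (X \<omega>)) - 1) \<partial>M) \<longlonglongrightarrow> 0"
proof -
  interpret prob_space M by fact
  have ev: "\<forall>\<^sub>F m in sequentially. norm (iexp (2*pi*fact m * real_of_rat q) - 1) = 0" for q :: rat
  proof -
    have "real_of_rat q \<in> \<rat>" by simp
    then obtain a b where ab: "b > 0" "real_of_rat q = of_int a / of_int b" using Rats_cases' by metis
    have "iexp (2*pi*fact m * real_of_rat q) = 1" if m: "m \<ge> nat b" for m
    proof -
      have "nat b dvd fact m" using m ab(1) by (intro dvd_fact) auto
      then obtain k where k: "fact m = nat b * k" by (auto elim: dvdE)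
      have f: "(fact m :: real) = real k * of_int b"
      proof -
        have "(fact m :: real) = of_nat (fact m)" by simp
        also have "\<dots> = of_nat (nat b * k)" by (simp only: k)
        also have "\<dots> = real k * of_int b" using ab(1) by simp
        finally show ?thesis .
      qed
      have "(fact m :: real) * real_of_rat q = of_int (int k * a)"
        using ab(1) by (simp add: f ab(2))
      then show ?thesis using iexp_int[of "int k * a"] by (simp add: mult.assoc)
    qed
    then show ?thesis unfolding eventually_sequentially by auto
  qed
  have "(\<lambda>m. \<integral>\<omega>. norm (iexp (2*pi*fact m * real_of_rat (X \<omega>)) - 1) \<partial>M) \<longlonglongrightarrow> (\<integral>\<omega>. 0 \<partial>M)"
  proof (rule integral_dominated_convergence[where w="\<lambda>_. 2"])
    show "AE x in M. (\<lambda>i. norm (iexp (2*pi*fact i * real_of_rat (X x)) - 1)) \<longlonglongrightarrow> 0"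
      using ev by (auto intro!: tendsto_eventually)
    show "AE x in M. norm (norm (iexp (2*pi*fact i * real_of_rat (X x)) - 1)) \<le> 2" for i
    proof (intro AE_I2)
      fix x
      have "norm (iexp (2*pi*fact i * real_of_rat (X x)) - 1) \<le> norm (iexp (2*pi*fact i * real_of_rat (X x))) + norm (1::complex)"
        by (rule norm_triangle_ineq4)
      then show "norm (norm (iexp (2*pi*fact i * real_of_rat (X x)) - 1)) \<le> 2" by simp
    qed
  qed (auto intro: meas_rat_comp[OF assms(2)])
  then show ?thesis by simp
qed

lemma shift_bound:
  assumes "prob_space M" "X \<in> measurable M (count_space UNIV)"
  shows "norm (cfr M X (s + \<tau>) - cfr M X \<tau>) \<le> (\<integral>\<omega>. norm (iexp (s * real_of_rat (X \<omega>)) - 1) \<partial>M)"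
proof -
  have i1: "integrable M (\<lambda>\<omega>. iexp ((s+\<tau>) * real_of_rat (X \<omega>)))"
    by (rule integrable_bounded_rat[OF assms, where B=1]) simp
  have i2: "integrable M (\<lambda>\<omega>. iexp (\<tau> * real_of_rat (X \<omega>)))"
    by (rule integrable_bounded_rat[OF assms, where B=1]) simp
  have "cfr M X (s + \<tau>) - cfr M X \<tau> = (\<integral>\<omega>. iexp ((s+\<tau>) * real_of_rat (X \<omega>)) - iexp (\<tau> * real_of_rat (X \<omega>)) \<partial>M)"
    unfolding cfr_def by (rule Bochner_Integration.integral_diff[OF i1 i2, symmetric])
  also have "norm \<dots> \<le> (\<integral>\<omega>. norm (iexp ((s+\<tau>) * real_of_rat (X \<omega>)) - iexp (\<tau> * real_of_rat (X \<omega>))) \<partial>M)"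
    by (rule integral_norm_bound)
  also have "\<dots> = (\<integral>\<omega>. norm (iexp (s * real_of_rat (X \<omega>)) - 1) \<partial>M)"
  proof (rule Bochner_Integration.integral_cong[OF refl])
    fix \<omega>
    have "iexp ((s+\<tau>) * real_of_rat (X \<omega>)) - iexp (\<tau> * real_of_rat (X \<omega>)) =
          iexp (\<tau> * real_of_rat (X \<omega>)) * (iexp (s * real_of_rat (X \<omega>)) - 1)"
      by (simp add: algebra_simps flip: exp_add)
    then show "norm (iexp ((s+\<tau>) * real_of_rat (X \<omega>)) - iexp (\<tau> * real_of_rat (X \<omega>))) = norm (iexp (s * real_of_rat (X \<omega>)) - 1)"
      by (simp add: norm_mult)
  qed
  finally show ?thesis .
qed

lemma cfr_distr:
  assumes "X \<in> measurable M (count_space UNIV)" "X' \<in> measurable M' (count_space UNIV)"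
    and "distr M (count_space UNIV) X = distr M' (count_space UNIV) X'"
  shows "cfr M X = cfr M' X'"
proof
  fix t
  have "cfr M X t = (\<integral>x. iexp (t * real_of_rat x) \<partial>distr M (count_space UNIV) X)"
    unfolding cfr_def by (subst integral_distr[OF assms(1)]) auto
  also have "\<dots> = cfr M' X' t"
    unfolding cfr_def assms(3) by (subst integral_distr[OF assms(2)]) auto
  finally show "cfr M X t = cfr M' X' t" .
qed



lemma cfr_sm_tendsto:
  assumes "prob_space M" "X \<in> measurable M (count_space UNIV)"
  shows "(\<lambda>m. cfr M X (2*pi*fact m)) \<longlonglongrightarrow> 1"
proof -
  have "(\<lambda>m. cfr M X (2*pi*fact m) - 1) \<longlonglongrightarrow> 0"
  proof (rule Lim_null_comparison[OF _ approx_periods[OF assms]])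
    show "\<forall>\<^sub>F m in sequentially. norm (cfr M X (2*pi*fact m) - 1) \<le> (\<integral>\<omega>. norm (iexp (2*pi*fact m * real_of_rat (X \<omega>)) - 1) \<partial>M)"
      using shift_bound[OF assms, of "2*pi*fact _" 0] cfr_0[OF assms(1)] by (intro always_eventually allI) simp
  qed
  then show ?thesis using tendsto_add[OF _ tendsto_const[of 1]] by fastforce
qed

lemma final:
  assumes PM: "prob_space M" and PN: "prob_space N"
    and X: "X \<in> measurable M (count_space UNIV)" and Y: "Y \<in> measurable N (count_space UNIV)"
    and nzX: "\<And>t. cfr M X t \<noteq> 0"
    and hom: "\<And>k l. cfr N Y (k+l) / cfr M X (k+l) = (cfr N Y k / cfr M X k) * (cfr N Y l / cfr M X l)"
  shows "\<exists>\<alpha>::rat. distr N (count_space UNIV) Y = distr M (count_space UNIV) (\<lambda>\<omega>. X \<omega> + \<alpha>)"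
proof -
  interpret M: prob_space M by fact
  interpret N: prob_space N by fact
  define h where "h t = cfr N Y t / cfr M X t" for t
  have hc: "continuous_on UNIV h" unfolding h_def
    by (intro continuous_at_imp_continuous_on ballI isCont_divide cfr_isCont[OF PN Y] cfr_isCont[OF PM X] nzX)
  have h0: "h 0 = 1" unfolding h_def using cfr_0[OF PM] cfr_0[OF PN] by simp
  obtain c where hexp: "\<And>t. h t = exp (c * of_real t)"
    using cont_hom_exp[OF hc hom[folded h_def]] h0 by auto
  have "(\<lambda>m. h (2*pi*fact m)) \<longlonglongrightarrow> 1 / 1" unfolding h_def
    by (intro tendsto_divide cfr_sm_tendsto[OF PN Y] cfr_sm_tendsto[OF PM X]) simp
  then have "(\<lambda>m. norm (h (2*pi*fact m))) \<longlonglongrightarrow> 1" using tendsto_norm by fastforce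
  then have "(\<lambda>m. exp (Re c * (2*pi*fact m))) \<longlonglongrightarrow> 1" unfolding hexp by simp
  then have "(\<lambda>m. ln (exp (Re c * (2*pi*fact m)))) \<longlonglongrightarrow> ln 1" by (intro tendsto_ln) auto
  then have lim0: "(\<lambda>m. Re c * (2*pi*fact m)) \<longlonglongrightarrow> 0" by simp
  have Rec: "Re c = 0"
  proof (rule ccontr)
    assume ne: "Re c \<noteq> 0"
    then have "\<bar>Re c\<bar> * (2*pi) > 0" by simp
    from LIMSEQ_D[OF lim0 this] obtain m0 where m0: "\<And>m. m \<ge> m0 \<Longrightarrow> norm (Re c * (2*pi*fact m) - 0) < \<bar>Re c\<bar> * (2*pi)" by blast
    have f1: "(1::real) \<le> fact m0" by simp
    have "\<bar>Re c\<bar> * (2*pi) * 1 \<le> \<bar>Re c\<bar> * (2*pi) * fact m0"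
      by (intro mult_left_mono f1) simp
    also have "\<dots> = norm (Re c * (2*pi*fact m0) - 0)" by (simp add: abs_mult)
    finally show False using m0[of m0] by simp
  qed
  define \<alpha> where "\<alpha> = Im c"
  have c_eq: "c = \<i> * of_real \<alpha>" unfolding \<alpha>_def using Rec by (simp add: complex_eq_iff)
  define RX where "RX = (\<lambda>\<omega>. real_of_rat (X \<omega>) + \<alpha>)"
  define RY where "RY = (\<lambda>\<omega>. real_of_rat (Y \<omega>))"
  have RXm: "RX \<in> borel_measurable M" unfolding RX_def by (rule meas_rat_comp[OF X])
  have RYm: "RY \<in> borel_measurable N" unfolding RY_def by (rule meas_rat_comp[OF Y])
  have chareq: "char (distr N borel RY) = char (distr M borel RX)"
  proof
    fix t
    have "char (distr N borel RY) t = cfr N Y t" unfolding RY_def by (rule cfr_char[OF PN Y, symmetric])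
    also have "\<dots> = cfr M X t * h t" unfolding h_def using nzX[of t] by simp
    also have "\<dots> = cfr M X t * iexp (\<alpha> * t)" unfolding hexp c_eq by (simp add: mult_ac)
    also have "\<dots> = (\<integral>\<omega>. iexp (t * real_of_rat (X \<omega>)) * iexp (\<alpha> * t) \<partial>M)" unfolding cfr_def by simp
    also have "\<dots> = (\<integral>\<omega>. iexp (t * RX \<omega>) \<partial>M)" unfolding RX_def
      by (rule Bochner_Integration.integral_cong[OF refl]) (simp add: algebra_simps flip: exp_add)
    also have "\<dots> = char (distr M borel RX) t" unfolding char_def by (subst integral_distr[OF RXm]) auto
    finally show "char (distr N borel RY) t = char (distr M borel RX) t" .
  qed
  have deq: "distr N borel RY = distr M borel RX"
    by (rule Levy_uniqueness[OF _ _ chareq]) (auto intro: RXm RYm)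
  have cntbl: "countable (A::rat set)" for A by (rule countable_subset[OF subset_UNIV]) simp
  obtain \<omega>0 where \<omega>0: "\<omega>0 \<in> space M" "emeasure M {\<omega> \<in> space M. X \<omega> = X \<omega>0} \<noteq> 0"
  proof (rule ccontr)
    note ob = that
    assume nt: "\<not> thesis"
    have z: "emeasure M {\<omega> \<in> space M. X \<omega> = X \<omega>'} = 0" if om: "\<omega>' \<in> space M" for \<omega>'
      using ob[OF om] nt by blast
    have "emeasure (distr M (count_space UNIV) X) (X ` space M) =
        (\<integral>\<^sup>+q. emeasure (distr M (count_space UNIV) X) {q} \<partial>count_space (X ` space M))"
      by (rule emeasure_countable_singleton) (auto intro: cntbl)
    also have "\<dots> = (\<integral>\<^sup>+q. 0 \<partial>count_space (X ` space M))"
    proof (rule nn_integral_cong)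
      fix q assume "q \<in> space (count_space (X ` space M))"
      then obtain \<omega>' where "\<omega>' \<in> space M" "q = X \<omega>'" by auto
      then show "emeasure (distr M (count_space UNIV) X) {q} = 0"
        using z[of \<omega>'] by (subst emeasure_distr[OF X]) (auto simp: vimage_def Int_def conj_commute)
    qed
    also have "\<dots> = 0" by simp
    finally have "emeasure (distr M (count_space UNIV) X) (X ` space M) = 0" .
    moreover have "emeasure (distr M (count_space UNIV) X) (X ` space M) = emeasure M (space M)"
      by (subst emeasure_distr[OF X]) (auto intro!: arg_cong[where f="emeasure M"])
    ultimately show False using M.emeasure_space_1 by simp
  qed
  define q where "q = X \<omega>0"
  have sing: "{x} \<in> sets borel" for x :: real by simp
  have "emeasure (distr N borel RY) {real_of_rat q + \<alpha>} = emeasure (distr M borel RX) {real_of_rat q + \<alpha>}"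
    by (simp only: deq)
  also have "\<dots> = emeasure M {\<omega> \<in> space M. X \<omega> = q}"
    by (subst emeasure_distr[OF RXm sing]) (auto simp: RX_def intro!: arg_cong[where f="emeasure M"])
  finally have "emeasure N (RY -` {real_of_rat q + \<alpha>} \<inter> space N) \<noteq> 0"
    using \<omega>0(2) unfolding q_def by (subst (asm) emeasure_distr[OF RYm sing]) auto
  then have "RY -` {real_of_rat q + \<alpha>} \<inter> space N \<noteq> {}" by (metis emeasure_empty)
  then obtain \<omega>1 where "\<omega>1 \<in> space N" "RY \<omega>1 = real_of_rat q + \<alpha>" by blast
  then have a_eq: "\<alpha> = real_of_rat (Y \<omega>1 - q)" unfolding RY_def by (simp add: of_rat_diff)
  define \<beta> where "\<beta> = Y \<omega>1 - q"
  show ?thesis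
  proof (intro exI[of _ \<beta>] measure_eqI)
    show "sets (distr N (count_space UNIV) Y) = sets (distr M (count_space UNIV) (\<lambda>\<omega>. X \<omega> + \<beta>))" by simp
    fix A assume "A \<in> sets (distr N (count_space UNIV) Y)"
    have Ab: "real_of_rat ` A \<in> sets borel"
      by (rule sets.countable) (auto intro: countable_image cntbl)
    have Xb: "(\<lambda>\<omega>. X \<omega> + \<beta>) \<in> measurable M (count_space UNIV)"
      by (rule measurable_compose[OF X]) simp
    have "emeasure (distr N (count_space UNIV) Y) A = emeasure N (Y -` A \<inter> space N)"
      by (subst emeasure_distr[OF Y]) auto
    also have "Y -` A \<inter> space N = RY -` (real_of_rat ` A) \<inter> space N"
      unfolding RY_def by auto
    also have "emeasure N \<dots> = emeasure (distr N borel RY) (real_of_rat ` A)"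
      by (subst emeasure_distr[OF RYm Ab]) auto
    also have "\<dots> = emeasure (distr M borel RX) (real_of_rat ` A)" by (simp only: deq)
    also have "\<dots> = emeasure M (RX -` (real_of_rat ` A) \<inter> space M)"
      by (subst emeasure_distr[OF RXm Ab]) auto
    also have "RX -` (real_of_rat ` A) \<inter> space M = (\<lambda>\<omega>. X \<omega> + \<beta>) -` A \<inter> space M"
    proof -
      have "real_of_rat (X \<omega>) + \<alpha> \<in> real_of_rat ` A \<longleftrightarrow> X \<omega> + \<beta> \<in> A" for \<omega>
      proof -
        have "real_of_rat (X \<omega>) + \<alpha> = real_of_rat (X \<omega> + \<beta>)" unfolding a_eq \<beta>_def by (simp add: of_rat_add)
        then show ?thesis by (auto simp: image_iff)
      qed
      then show ?thesis unfolding RX_def by auto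
    qed
    also have "emeasure M \<dots> = emeasure (distr M (count_space UNIV) (\<lambda>\<omega>. X \<omega> + \<beta>)) A"
      by (subst emeasure_distr[OF Xb]) auto
    finally show "emeasure (distr N (count_space UNIV) Y) A = emeasure (distr M (count_space UNIV) (\<lambda>\<omega>. X \<omega> + \<beta>)) A" .
  qed
qed



lemma bimult_hom:
  fixes h :: "real \<Rightarrow> complex"
  assumes hc: "continuous_on UNIV h" and hnz: "\<And>x. h x \<noteq> 0" and h0: "h 0 = 1"
    and d3: "\<And>k l m. h (k+l+m) * h k * h l * h m = h (k+l) * h (k+m) * h (l+m) * h 0"
    and U: "\<And>\<epsilon>. \<epsilon> > 0 \<Longrightarrow> \<exists>m0. \<forall>m\<ge>m0. \<forall>k\<in>{0..1}. norm (h (k + 2*pi*fact m) / (h k * h (2*pi*fact m)) - 1) < \<epsilon>"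
  shows "h (k+l) = h k * h l"
proof -
  define B where "B k l = h (k+l) / (h k * h l)" for k l
  have Bmult: "B k (l+m) = B k l * B k m" for k l m
  proof -
    have e: "h (k+l+m) * h k * h l * h m = h (k+l) * h (k+m) * h (l+m)" using d3[of k l m] h0 by simp
    show ?thesis unfolding B_def using hnz e
      by (simp add: field_simps add.assoc)
  qed
  have Bsym: "B k l = B l k" for k l unfolding B_def by (simp add: add.commute mult.commute)
  have B0: "B k 0 = 1" for k unfolding B_def using hnz h0 by simp
  have Bnz: "B k l \<noteq> 0" for k l unfolding B_def using hnz by simp
  have Bnat: "B k (of_nat n * l) = B k l ^ n" for k l n
  proof (induction n)
    case 0 then show ?case by (simp add: B0)
  next
    case (Suc n)
    have "B k (of_nat (Suc n) * l) = B k (l + of_nat n * l)" by (simp add: algebra_simps)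
    also have "\<dots> = B k l * B k l ^ n" by (simp only: Bmult Suc)
    finally show ?case by simp
  qed
  have Bnat': "B (of_nat n * k) l = B k l ^ n" for k l n
    using Bnat[of l n k] Bsym by metis
  have Bneg: "B k (-l) = inverse (B k l)" for k l
  proof -
    have "B k l * B k (-l) = 1" using Bmult[of k l "-l"] B0 by simp
    then show ?thesis using Bnz[of k l] by (metis inverse_unique)
  qed
  have Bint: "B x (of_int a * l) = 1" if "B x l = 1" for x a l
  proof (cases "a \<ge> 0")
    case True then show ?thesis using Bnat[of x "nat a" l] that by simp
  next
    case False
    then have "of_int a * l = - (of_nat (nat (-a)) * l)" by simp
    then show ?thesis using Bneg Bnat[of x "nat (-a)" l] that by simp
  qed
  have C1: "B u (2*pi) = 1" if u: "u \<ge> 0" for u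
  proof (rule ccontr)
    assume ne: "B u (2*pi) \<noteq> 1"
    define \<epsilon> where "\<epsilon> = norm (B u (2*pi) - 1)"
    have "\<epsilon> > 0" using ne unfolding \<epsilon>_def by simp
    from U[OF this] obtain m0 where m0: "\<And>m k. m \<ge> m0 \<Longrightarrow> k \<in> {0..1} \<Longrightarrow> norm (B k (2*pi*fact m) - 1) < \<epsilon>"
      unfolding B_def by blast
    define m where "m = max m0 (nat \<lceil>u\<rceil>)"
    have "real m \<ge> u" unfolding m_def by linarith
    moreover have "real m \<le> fact m" using fact_ge_self[of m] by (metis of_nat_fact of_nat_le_iff)
    ultimately have um: "u \<le> fact m" by linarith
    have fpos: "(fact m :: real) > 0" by simp
    define k where "k = u / fact m"
    have k01: "k \<in> {0..1}" unfolding k_def using u um fpos by (auto simp: field_simps)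
    have "B k (2*pi*fact m) = B k (of_nat (fact m) * (2*pi))" by (simp add: mult.commute)
    also have "\<dots> = B k (2*pi) ^ fact m" by (rule Bnat)
    also have "\<dots> = B (of_nat (fact m) * k) (2*pi)" by (rule Bnat'[symmetric])
    also have "of_nat (fact m) * k = u" unfolding k_def using fpos by simp
    finally have "B k (2*pi*fact m) = B u (2*pi)" .
    then show False using m0[of m k] k01 unfolding m_def \<epsilon>_def by simp
  qed
  have C2: "B u (2*pi) = 1" for u
  proof (cases "u \<ge> 0")
    case True then show ?thesis by (rule C1)
  next
    case False
    have "B u (2*pi) = B (2*pi) u" by (rule Bsym)
    also have "\<dots> = inverse (B (2*pi) (-u))" using Bneg[of "2*pi" "-u"] by simp
    also have "B (2*pi) (-u) = B (-u) (2*pi)" by (rule Bsym)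
    also have "\<dots> = 1" using False by (intro C1) simp
    finally show ?thesis by simp
  qed
  have C3: "B x (2*pi*r) = 1" if r: "r \<in> \<rat>" for x r
  proof -
    obtain a b where ab: "b > 0" "r = of_int a / of_int b" using Rats_cases'[OF r] by metis
    have bb: "(of_nat (nat b) :: real) = of_int b" using ab(1) by simp
    have "B x (2*pi*r) = B (of_nat (nat b) * (x / of_int b)) (2*pi*r)" using ab(1) bb by simp
    also have "\<dots> = B (x / of_int b) (2*pi*r) ^ nat b" by (rule Bnat')
    also have "\<dots> = B (x / of_int b) (of_nat (nat b) * (2*pi*r))" by (rule Bnat[symmetric])
    also have "of_nat (nat b) * (2*pi*r) = of_int a * (2*pi)" unfolding bb ab(2) using ab(1) by simp
    also have "B (x / of_int b) \<dots> = 1" by (rule Bint[OF C2])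
    finally show ?thesis .
  qed
  have C4: "B k l = 1"
  proof -
    have cont: "continuous_on UNIV (\<lambda>r. B k (2*pi*r))" unfolding B_def
      by (intro continuous_intros continuous_on_compose2[OF hc] hnz) (auto simp: hnz)
    have "(\<lambda>r. B k (2*pi*r)) (l/(2*pi)) = 1"
      by (rule continuous_constant_on_closure[of \<rat>]) (use cont C3 Rats_closure_real in auto)
    then show ?thesis by simp
  qed
  then show ?thesis unfolding B_def using hnz by (simp add: field_simps)
qed



lemma cfr_norm_le1:
  assumes "prob_space M" "X \<in> measurable M (count_space UNIV)"
  shows "norm (cfr M X t) \<le> 1"
  using real_distribution.cmod_char_le_1[OF cfr_realdist[OF assms]] cfr_char[OF assms] by simp

lemma uniform_U:
  assumes PM: "prob_space M" and PN: "prob_space N"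
    and X: "X \<in> measurable M (count_space UNIV)" and Y: "Y \<in> measurable N (count_space UNIV)"
    and nzX: "\<And>t. cfr M X t \<noteq> 0" and nzY: "\<And>t. cfr N Y t \<noteq> 0"
    and eps: "\<epsilon> > 0"
  shows "\<exists>m0. \<forall>m\<ge>m0. \<forall>k\<in>{0..1}. norm ((cfr N Y (k + 2*pi*fact m) / cfr M X (k + 2*pi*fact m)) /
            ((cfr N Y k / cfr M X k) * (cfr N Y (2*pi*fact m) / cfr M X (2*pi*fact m))) - 1) < \<epsilon>"
proof -
  define f where "f = cfr M X"
  define g where "g = cfr N Y"
  have fnz: "f t \<noteq> 0" and gnz: "g t \<noteq> 0" for t unfolding f_def g_def using nzX nzY by auto
  have fle: "norm (f t) \<le> 1" and gle: "norm (g t) \<le> 1" for t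
    unfolding f_def g_def using cfr_norm_le1[OF PM X] cfr_norm_le1[OF PN Y] by auto
  have contfg: "continuous_on {0..1} (\<lambda>k. norm (f k * g k))" unfolding f_def g_def
    by (intro continuous_at_imp_continuous_on ballI continuous_intros cfr_isCont[OF PM X] cfr_isCont[OF PN Y])
  obtain x0 where x0: "x0 \<in> {0..1::real}" "\<And>y. y \<in> {0..1} \<Longrightarrow> norm (f x0 * g x0) \<le> norm (f y * g y)"
    using continuous_attains_inf[OF compact_Icc _ contfg] by auto
  define \<mu> where "\<mu> = norm (f x0 * g x0)"
  have \<mu>pos: "\<mu> > 0" unfolding \<mu>_def using fnz gnz by simp
  define dX where "dX m = (\<integral>\<omega>. norm (iexp (2*pi*fact m * real_of_rat (X \<omega>)) - 1) \<partial>M)" for m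
  define dY where "dY m = (\<integral>\<omega>. norm (iexp (2*pi*fact m * real_of_rat (Y \<omega>)) - 1) \<partial>N)" for m
  have "(\<lambda>m. dX m + dY m) \<longlonglongrightarrow> 0 + 0" unfolding dX_def dY_def
    by (intro tendsto_add approx_periods[OF PM X] approx_periods[OF PN Y])
  moreover define \<eta> where "\<eta> = min (\<mu>/2) (\<epsilon>*\<mu>/4)"
  moreover have "\<eta> > 0" unfolding \<eta>_def using \<mu>pos eps by simp
  ultimately obtain m0 where m0: "\<And>m. m \<ge> m0 \<Longrightarrow> norm (dX m + dY m - 0) < \<eta>"
    using LIMSEQ_D by fastforce
  have "\<forall>m\<ge>m0. \<forall>k\<in>{0..1}. norm ((g (k + 2*pi*fact m) / f (k + 2*pi*fact m)) /
            ((g k / f k) * (g (2*pi*fact m) / f (2*pi*fact m))) - 1) < \<epsilon>"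
  proof (intro allI impI ballI)
    fix m k assume m: "m \<ge> m0" and k: "k \<in> {0..1::real}"
    define s where "s = 2*pi*fact m"
    define d where "d = dX m + dY m"
    have dXnn: "dX m \<ge> 0" and dYnn: "dY m \<ge> 0" unfolding dX_def dY_def by simp_all
    have dlt: "d < \<eta>" using m0[OF m] dXnn dYnn unfolding d_def by simp
    have a1: "norm (g (k+s) - g k) \<le> dY m"
      using shift_bound[OF PN Y, of s k] unfolding g_def dY_def s_def by (simp add: add.commute)
    have a2: "norm (f (k+s) - f k) \<le> dX m"
      using shift_bound[OF PM X, of s k] unfolding f_def dX_def s_def by (simp add: add.commute)
    have a3: "norm (f s - 1) \<le> dX m"
      using shift_bound[OF PM X, of s 0] cfr_0[OF PM] unfolding f_def dX_def s_def by simp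
    have a4: "norm (g s - 1) \<le> dY m"
      using shift_bound[OF PN Y, of s 0] cfr_0[OF PN] unfolding g_def dY_def s_def by simp
    define P where "P = g k * f k"
    define Nm where "Nm = g (k+s) * f k * f s"
    define Dm where "Dm = f (k+s) * g k * g s"
    have "Nm - P = (g (k+s) - g k) * (f k * f s) + P * (f s - 1)" unfolding Nm_def P_def by (simp add: algebra_simps)
    then have "norm (Nm - P) \<le> norm (g (k+s) - g k) * norm (f k * f s) + norm P * norm (f s - 1)"
      by (metis norm_mult norm_triangle_ineq)
    also have "\<dots> \<le> dY m * 1 + 1 * dX m"
    proof (intro add_mono mult_mono a1 a3)
      show "norm (f k * f s) \<le> 1" using fle[of k] fle[of s] by (simp add: norm_mult mult_le_one)
      show "norm P \<le> 1" unfolding P_def using fle[of k] gle[of k] by (simp add: norm_mult mult_le_one)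
    qed (use dYnn in auto)
    finally have nN: "norm (Nm - P) \<le> d" unfolding d_def by simp
    have "Dm - P = (f (k+s) - f k) * (g k * g s) + P * (g s - 1)" unfolding Dm_def P_def by (simp add: algebra_simps)
    then have "norm (Dm - P) \<le> norm (f (k+s) - f k) * norm (g k * g s) + norm P * norm (g s - 1)"
      by (metis norm_mult norm_triangle_ineq)
    also have "\<dots> \<le> dX m * 1 + 1 * dY m"
    proof (intro add_mono mult_mono a2 a4)
      show "norm (g k * g s) \<le> 1" using gle[of k] gle[of s] by (simp add: norm_mult mult_le_one)
      show "norm P \<le> 1" unfolding P_def using fle[of k] gle[of k] by (simp add: norm_mult mult_le_one)
    qed (use dXnn in auto)
    finally have nD: "norm (Dm - P) \<le> d" unfolding d_def by simp
    have Pge: "norm P \<ge> \<mu>" unfolding P_def \<mu>_def using x0(2)[OF k] by (simp add: mult.commute)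
    have "norm P \<le> norm Dm + norm (Dm - P)" by (metis norm_minus_commute norm_triangle_sub)
    then have Dge: "norm Dm \<ge> \<mu> - d" using Pge nD by simp
    have "d < \<mu>/2" using dlt unfolding \<eta>_def by simp
    then have Dge2: "norm Dm > \<mu>/2" using Dge by simp
    have "norm (Nm - Dm) \<le> norm (Nm - P) + norm (Dm - P)" by (metis norm_triangle_ineq4 diff_diff_eq2 norm_minus_commute diff_add_cancel)
    then have ND: "norm (Nm - Dm) \<le> 2 * d" using nN nD by simp
    have Dnz: "Dm \<noteq> 0" using Dge2 \<mu>pos by auto
    have eq: "(g (k+s) / f (k+s)) / ((g k / f k) * (g s / f s)) = Nm / Dm"
      unfolding Nm_def Dm_def using fnz[of "k+s"] fnz[of k] fnz[of s] gnz[of k] gnz[of s] by (simp add: divide_simps)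
    have "Nm / Dm - 1 = (Nm - Dm) / Dm" using Dnz by (simp add: diff_divide_distrib)
    then have "norm (Nm / Dm - 1) = norm (Nm - Dm) / norm Dm" by (simp add: norm_divide)
    also have "\<dots> \<le> (2 * d) / (\<mu>/2)"
      by (rule frac_le) (use ND Dge2 \<mu>pos dXnn dYnn in \<open>auto simp: d_def\<close>)
    also have "\<dots> < \<epsilon>"
    proof -
      have "d < \<epsilon>*\<mu>/4" using dlt unfolding \<eta>_def by simp
      then show ?thesis using \<mu>pos by (simp add: field_simps)
    qed
    finally show "norm ((g (k + 2*pi*fact m) / f (k + 2*pi*fact m)) /
            ((g k / f k) * (g (2*pi*fact m) / f (2*pi*fact m))) - 1) < \<epsilon>"
      using eq unfolding s_def by simp
  qed
  then show ?thesis unfolding f_def g_def by blast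
qed



lemma adm_prob: "admissible4 M X \<Longrightarrow> prob_space M"
  unfolding admissible4_def by simp

lemma adm_meas:
  assumes "admissible4 M X" "j \<in> {1..4}"
  shows "X j \<in> measurable M (count_space UNIV)"
proof -
  interpret prob_space M using assms(1) by (rule adm_prob)
  show ?thesis using assms unfolding admissible4_def indep_vars_def by auto
qed

lemma adm_nz:
  assumes "admissible4 M X" "j \<in> {1..4}"
  shows "cfr M (X j) t \<noteq> 0"
  using assms cfr_nz unfolding admissible4_def by blast

lemma meas2:
  fixes X :: "'a \<Rightarrow> 'c::countable" and Y :: "'a \<Rightarrow> 'd::countable"
  assumes "X \<in> measurable M (count_space UNIV)" "Y \<in> measurable M (count_space UNIV)"
  shows "(\<lambda>\<omega>. F (X \<omega>) (Y \<omega>)) \<in> measurable M (count_space UNIV)"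
proof (rule measurable_compose_countable[OF _ assms(1)])
  fix i show "(\<lambda>\<omega>. F i (Y \<omega>)) \<in> measurable M (count_space UNIV)"
    by (rule measurable_compose[OF assms(2)]) simp
qed

lemma joint_cf:
  fixes a2 a3 b2 b3 :: rat
  assumes adm: "admissible4 M X"
  shows "(\<integral>\<omega>. iexp (s * real_of_rat (X 1 \<omega> + a2 * X 2 \<omega> + a3 * X 3 \<omega>) + t * real_of_rat (b2 * X 2 \<omega> + b3 * X 3 \<omega> + X 4 \<omega>)) \<partial>M)
     = cfr M (X 1) s * cfr M (X 2) (real_of_rat a2 * s + real_of_rat b2 * t) * cfr M (X 3) (real_of_rat a3 * s + real_of_rat b3 * t) * cfr M (X 4) t"
proof -
  interpret prob_space M using adm by (rule adm_prob)
  define c where "c i = (if i = (1::nat) then s else if i = 2 then real_of_rat a2 * s + real_of_rat b2 * t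
      else if i = 3 then real_of_rat a3 * s + real_of_rat b3 * t else t)" for i
  define Z where "Z i \<omega> = iexp (c i * real_of_rat (X i \<omega>))" for i \<omega>
  have indX: "indep_vars (\<lambda>_. count_space UNIV) X {1..4}" using adm unfolding admissible4_def by simp
  have ind: "indep_vars (\<lambda>_. borel) Z {1..4}" unfolding Z_def
    by (rule indep_vars_compose2[OF indX, where Y="\<lambda>i q. iexp (c i * real_of_rat q)"]) simp
  have intZ: "integrable M (Z i)" if "i \<in> {1..4}" for i unfolding Z_def
    by (rule integrable_bounded_rat[OF prob_space_axioms adm_meas[OF adm that], where B=1]) simp
  have "(\<integral>\<omega>. (\<Prod>i\<in>{1..4}. Z i \<omega>) \<partial>M) = (\<Prod>i\<in>{1..4}. \<integral>\<omega>. Z i \<omega> \<partial>M)"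
    by (rule indep_vars_lebesgue_integral[OF _ ind intZ]) auto
  moreover have I: "{1..4::nat} = {1,2,3,4}" by auto
  ultimately have e: "(\<integral>\<omega>. Z 1 \<omega> * Z 2 \<omega> * Z 3 \<omega> * Z 4 \<omega> \<partial>M) = (\<integral>\<omega>. Z 1 \<omega> \<partial>M) * (\<integral>\<omega>. Z 2 \<omega> \<partial>M) * (\<integral>\<omega>. Z 3 \<omega> \<partial>M) * (\<integral>\<omega>. Z 4 \<omega> \<partial>M)"
    by (simp add: mult.assoc)
  have pt: "iexp (s * real_of_rat (X 1 \<omega> + a2 * X 2 \<omega> + a3 * X 3 \<omega>) + t * real_of_rat (b2 * X 2 \<omega> + b3 * X 3 \<omega> + X 4 \<omega>))
      = Z 1 \<omega> * Z 2 \<omega> * Z 3 \<omega> * Z 4 \<omega>" for \<omega>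
  proof -
    have "Z 1 \<omega> * Z 2 \<omega> * Z 3 \<omega> * Z 4 \<omega> = exp (\<i> * of_real (c 1 * real_of_rat (X 1 \<omega>)) + \<i> * of_real (c 2 * real_of_rat (X 2 \<omega>))
        + \<i> * of_real (c 3 * real_of_rat (X 3 \<omega>)) + \<i> * of_real (c 4 * real_of_rat (X 4 \<omega>)))"
      unfolding Z_def by (simp only: exp_add)
    also have "\<dots> = iexp (s * real_of_rat (X 1 \<omega> + a2 * X 2 \<omega> + a3 * X 3 \<omega>) + t * real_of_rat (b2 * X 2 \<omega> + b3 * X 3 \<omega> + X 4 \<omega>))"
      unfolding c_def by (simp add: of_rat_add of_rat_mult algebra_simps)
    finally show ?thesis by simp
  qed
  show ?thesis unfolding pt e unfolding Z_def cfr_def c_def by simp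
qed

lemma meas_forms:
  fixes a2 a3 b2 b3 :: rat
  assumes adm: "admissible4 M X"
  shows "(\<lambda>\<omega>. (X 1 \<omega> + a2 * X 2 \<omega> + a3 * X 3 \<omega>, b2 * X 2 \<omega> + b3 * X 3 \<omega> + X 4 \<omega>)) \<in> measurable M (count_space UNIV)"
proof -
  have m1: "X 1 \<in> measurable M (count_space UNIV)" by (rule adm_meas[OF adm]) simp
  have m2: "X 2 \<in> measurable M (count_space UNIV)" by (rule adm_meas[OF adm]) simp
  have m3: "X 3 \<in> measurable M (count_space UNIV)" by (rule adm_meas[OF adm]) simp
  have m4: "X 4 \<in> measurable M (count_space UNIV)" by (rule adm_meas[OF adm]) simp
  have m12: "(\<lambda>\<omega>. X 1 \<omega> + a2 * X 2 \<omega>) \<in> measurable M (count_space UNIV)"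
    by (rule meas2[where F="\<lambda>u v. u + a2 * v", OF m1 m2])
  have m123: "(\<lambda>\<omega>. X 1 \<omega> + a2 * X 2 \<omega> + a3 * X 3 \<omega>) \<in> measurable M (count_space UNIV)"
    by (rule meas2[where F="\<lambda>u v. u + a3 * v", OF m12 m3])
  have n23: "(\<lambda>\<omega>. b2 * X 2 \<omega> + b3 * X 3 \<omega>) \<in> measurable M (count_space UNIV)"
    by (rule meas2[where F="\<lambda>u v. b2 * u + b3 * v", OF m2 m3])
  have n234: "(\<lambda>\<omega>. b2 * X 2 \<omega> + b3 * X 3 \<omega> + X 4 \<omega>) \<in> measurable M (count_space UNIV)"
    by (rule meas2[where F="\<lambda>u v. u + v", OF n23 m4])
  show ?thesis by (rule meas2[where F=Pair, OF m123 n234])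
qed

lemma funeq:
  fixes a2 a3 b2 b3 :: rat
  assumes xi: "admissible4 M \<xi>" and eta: "admissible4 N \<eta>"
    and joint: "distr N (count_space UNIV)
                   (\<lambda>\<omega>. (\<eta> 1 \<omega> + a2 * \<eta> 2 \<omega> + a3 * \<eta> 3 \<omega>, b2 * \<eta> 2 \<omega> + b3 * \<eta> 3 \<omega> + \<eta> 4 \<omega>))
              = distr M (count_space UNIV)
                   (\<lambda>\<omega>. (\<xi> 1 \<omega> + a2 * \<xi> 2 \<omega> + a3 * \<xi> 3 \<omega>, b2 * \<xi> 2 \<omega> + b3 * \<xi> 3 \<omega> + \<xi> 4 \<omega>))"
  shows "(cfr N (\<eta> 1) s / cfr M (\<xi> 1) s) * (cfr N (\<eta> 2) (real_of_rat a2 * s + real_of_rat b2 * t) / cfr M (\<xi> 2) (real_of_rat a2 * s + real_of_rat b2 * t))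
       * (cfr N (\<eta> 3) (real_of_rat a3 * s + real_of_rat b3 * t) / cfr M (\<xi> 3) (real_of_rat a3 * s + real_of_rat b3 * t))
       * (cfr N (\<eta> 4) t / cfr M (\<xi> 4) t) = 1"
proof -
  define F where "F = (\<lambda>(u::rat, v::rat). iexp (s * real_of_rat u + t * real_of_rat v))"
  have mx: "(\<lambda>\<omega>. (\<xi> 1 \<omega> + a2 * \<xi> 2 \<omega> + a3 * \<xi> 3 \<omega>, b2 * \<xi> 2 \<omega> + b3 * \<xi> 3 \<omega> + \<xi> 4 \<omega>)) \<in> measurable M (count_space UNIV)"
    using meas_forms[OF xi] .
  have my: "(\<lambda>\<omega>. (\<eta> 1 \<omega> + a2 * \<eta> 2 \<omega> + a3 * \<eta> 3 \<omega>, b2 * \<eta> 2 \<omega> + b3 * \<eta> 3 \<omega> + \<eta> 4 \<omega>)) \<in> measurable N (count_space UNIV)"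
    using meas_forms[OF eta] .
  have "(\<integral>\<omega>. F (\<eta> 1 \<omega> + a2 * \<eta> 2 \<omega> + a3 * \<eta> 3 \<omega>, b2 * \<eta> 2 \<omega> + b3 * \<eta> 3 \<omega> + \<eta> 4 \<omega>) \<partial>N)
      = (\<integral>z. F z \<partial>distr N (count_space UNIV) (\<lambda>\<omega>. (\<eta> 1 \<omega> + a2 * \<eta> 2 \<omega> + a3 * \<eta> 3 \<omega>, b2 * \<eta> 2 \<omega> + b3 * \<eta> 3 \<omega> + \<eta> 4 \<omega>)))"
    by (subst integral_distr[OF my]) auto
  also have "\<dots> = (\<integral>\<omega>. F (\<xi> 1 \<omega> + a2 * \<xi> 2 \<omega> + a3 * \<xi> 3 \<omega>, b2 * \<xi> 2 \<omega> + b3 * \<xi> 3 \<omega> + \<xi> 4 \<omega>) \<partial>M)"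
    unfolding joint by (subst integral_distr[OF mx]) auto
  finally have "cfr N (\<eta> 1) s * cfr N (\<eta> 2) (real_of_rat a2 * s + real_of_rat b2 * t) * cfr N (\<eta> 3) (real_of_rat a3 * s + real_of_rat b3 * t) * cfr N (\<eta> 4) t
      = cfr M (\<xi> 1) s * cfr M (\<xi> 2) (real_of_rat a2 * s + real_of_rat b2 * t) * cfr M (\<xi> 3) (real_of_rat a3 * s + real_of_rat b3 * t) * cfr M (\<xi> 4) t"
    unfolding F_def using joint_cf[OF xi] joint_cf[OF eta] by simp
  moreover have "cfr M (\<xi> j) u \<noteq> 0" if "j \<in> {1..4}" for j u using adm_nz[OF xi that] .
  ultimately show ?thesis by (simp add: field_simps)
qed



lemma root_hom:
  fixes h :: "real \<Rightarrow> complex" and r :: real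
  assumes hc: "continuous_on UNIV h" and h0: "h 0 = 1" and hnz: "\<And>x. h x \<noteq> 0"
    and Hhom: "\<And>k l. h (k+l) * h (r*(k+l)) = (h k * h (r*k)) * (h l * h (r*l))"
    and r: "\<bar>r\<bar> \<noteq> 1 \<or> r = 1"
  shows "h (k+l) = h k * h l"
proof -
  define H where "H t = h t * h (r*t)" for t
  have Hc: "continuous_on UNIV H" unfolding H_def
    by (intro continuous_intros hc continuous_on_compose2[OF hc]) auto
  have H0: "H 0 \<noteq> 0" unfolding H_def using h0 by simp
  obtain c where Hc': "\<And>t. H t = exp (c * of_real t)"
    using cont_hom_exp[OF Hc _ H0] Hhom unfolding H_def by metis
  have r1: "1 + r \<noteq> 0" using r by auto
  define d where "d = c / of_real (1 + r)"
  define \<phi> where "\<phi> t = h t / exp (d * of_real t)" for t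
  have \<phi>c: "continuous_on UNIV \<phi>" unfolding \<phi>_def by (intro continuous_intros hc) auto
  have \<phi>0: "\<phi> 0 = 1" unfolding \<phi>_def using h0 by simp
  have \<phi>nz: "\<phi> t \<noteq> 0" for t unfolding \<phi>_def using hnz by simp
  have \<phi>r: "\<phi> t * \<phi> (r*t) = 1" for t
  proof -
    have r1': "(1 + of_real r :: complex) \<noteq> 0" using r1 by (metis of_real_1 of_real_add of_real_eq_0_iff)
    have dc: "d * (1 + of_real r) = c" unfolding d_def using r1' by simp
    have "d * of_real t + d * of_real (r*t) = (d * (1 + of_real r)) * of_real t" by (simp add: algebra_simps)
    then have "d * of_real t + d * of_real (r*t) = c * of_real t" by (simp only: dc)
    then have "exp (d * of_real t) * exp (d * of_real (r*t)) = exp (c * of_real t)" by (simp flip: exp_add)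
    then show ?thesis unfolding \<phi>_def using Hc'[of t] unfolding H_def by (simp add: field_simps)
  qed
  have \<phi>1: "\<phi> t = 1" for t
  proof (cases "r = 1")
    case True
    then have sq: "\<phi> t * \<phi> t = 1" for t using \<phi>r[of t] by simp
    have "\<phi> ` UNIV \<subseteq> {1, -1}"
    proof
      fix z assume "z \<in> \<phi> ` UNIV"
      then obtain t where "z = \<phi> t" by auto
      then have "z * z = 1" using sq by simp
      then have "(z - 1) * (z + 1) = 0" by (simp add: algebra_simps)
      then show "z \<in> {1, -1}" by (auto simp: eq_neg_iff_add_eq_0)
    qed
    then have "finite (\<phi> ` UNIV)" by (rule finite_subset) simp
    then have "\<phi> constant_on UNIV" by (rule continuous_finite_range_constant[OF connected_UNIV \<phi>c])
    then show ?thesis using \<phi>0 unfolding constant_on_def by (metis UNIV_I)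
  next
    case False
    then have rne: "\<bar>r\<bar> \<noteq> 1" using r by simp
    have step: "\<phi> t = \<phi> (r*r*t)" for t
    proof -
      have "\<phi> t * \<phi> (r*t) = \<phi> (r*t) * \<phi> (r*(r*t))" using \<phi>r[of t] \<phi>r[of "r*t"] by simp
      then have "\<phi> t = \<phi> (r*(r*t))" using \<phi>nz[of "r*t"] by (simp add: mult.commute)
      then show ?thesis by (simp add: mult.assoc)
    qed
    define \<rho> where "\<rho> = (if \<bar>r\<bar> < 1 then r*r else 1/(r*r))"
    have \<rho>lt: "\<bar>\<rho>\<bar> < 1"
    proof (cases "\<bar>r\<bar> < 1")
      case True
      then have "\<bar>r\<bar> * \<bar>r\<bar> < 1 * 1" by (intro mult_strict_mono') auto
      then show ?thesis using True unfolding \<rho>_def by (simp add: abs_mult)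
    next
      case False
      then have "\<bar>r\<bar> > 1" using rne by simp
      then have "1 * 1 < \<bar>r\<bar> * \<bar>r\<bar>" by (intro mult_strict_mono) auto
      then show ?thesis using False unfolding \<rho>_def by (simp add: abs_mult)
    qed
    have \<rho>step: "\<phi> (\<rho>*t) = \<phi> t" for t
    proof (cases "\<bar>r\<bar> < 1")
      case True then show ?thesis unfolding \<rho>_def using step[of t] by simp
    next
      case False
      then have rnz: "r \<noteq> 0" by auto
      have "\<phi> (1/(r*r)*t) = \<phi> (r*r*(1/(r*r)*t))" by (rule step[of "1/(r*r)*t"])
      also have "r*r*(1/(r*r)*t) = t" using rnz by simp
      finally show ?thesis using False unfolding \<rho>_def by simp
    qed
    have iter: "\<phi> (\<rho>^n * t) = \<phi> t" for n
    proof (induction n)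
      case (Suc n)
      have "\<phi> (\<rho>^Suc n * t) = \<phi> (\<rho> * (\<rho>^n * t))" by (simp add: mult.assoc)
      also have "\<dots> = \<phi> (\<rho>^n * t)" by (rule \<rho>step)
      finally show ?case using Suc by simp
    qed simp
    have "(\<lambda>n. \<rho>^n * t) \<longlonglongrightarrow> 0 * t" by (intro tendsto_intros) (use \<rho>lt in simp)
    then have "(\<lambda>n. \<phi> (\<rho>^n * t)) \<longlonglongrightarrow> \<phi> 0"
      using continuous_on_tendsto_compose[OF \<phi>c] by auto
    then have "(\<lambda>n. \<phi> t) \<longlonglongrightarrow> 1" using iter \<phi>0 by simp
    then show ?thesis by (simp add: LIMSEQ_const_iff)
  qed
  have "h t = exp (d * of_real t)" for t using \<phi>1[of t] unfolding \<phi>_def by (simp add: divide_eq_1_iff)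
  then show ?thesis by (simp add: distrib_left exp_add)
qed



lemma cube_w:
  fixes Ha Hb Hc Hd :: "real \<Rightarrow> complex" and pa qa pb qb pc qc pd qd :: real
  assumes "\<And>x y. Ha (pa*x + qa*y) * Hb (pb*x + qb*y) * Hc (pc*x + qc*y) * Hd (pd*x + qd*y) = 1"
    "pa*qb - pb*qa \<noteq> 0" "pa*qc - pc*qa \<noteq> 0" "pa*qd - pd*qa \<noteq> 0"
  shows "Ha (k+l+m) * Ha k * Ha l * Ha m = Ha (k+l) * Ha (k+m) * Ha (l+m) * Ha 0"
  by (rule cube_lin[of Ha pa qa Hb pb qb Hc pc qc Hd pd qd, OF assms])

lemma square_w:
  fixes Ha Hb Hc :: "real \<Rightarrow> complex" and pa qa pb qb pc qc :: real
  assumes "\<And>x y. Ha (pa*x + qa*y) * Hb (pb*x + qb*y) * Hc (pc*x + qc*y) = 1"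
    "pa*qb - pb*qa \<noteq> 0" "pa*qc - pc*qa \<noteq> 0"
  shows "Ha (k+l) * Ha 0 = Ha k * Ha l"
  by (rule square_lin[of Ha pa qa Hb pb qb Hc pc qc, OF assms])

lemma hq_cont:
  assumes PM: "prob_space M" and PN: "prob_space N"
    and X: "X \<in> measurable M (count_space UNIV)" and Y: "Y \<in> measurable N (count_space UNIV)"
    and nzX: "\<And>t. cfr M X t \<noteq> 0"
  shows "continuous_on UNIV (\<lambda>t. cfr N Y t / cfr M X t)"
  by (intro continuous_at_imp_continuous_on ballI isCont_divide cfr_isCont[OF PN Y] cfr_isCont[OF PM X] nzX)

lemma caseI_j:
  assumes PM: "prob_space M" and PN: "prob_space N"
    and X: "X \<in> measurable M (count_space UNIV)" and Y: "Y \<in> measurable N (count_space UNIV)"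
    and nzX: "\<And>t. cfr M X t \<noteq> 0" and nzY: "\<And>t. cfr N Y t \<noteq> 0"
    and hh: "hh = (\<lambda>t. cfr N Y t / cfr M X t)"
    and d3: "\<And>k l m. hh (k+l+m) * hh k * hh l * hh m = hh (k+l) * hh (k+m) * hh (l+m) * hh 0"
  shows "\<exists>\<alpha>. distr N (count_space UNIV) Y = distr M (count_space UNIV) (\<lambda>\<omega>. X \<omega> + \<alpha>)"
proof -
  have hc: "continuous_on UNIV hh" unfolding hh by (rule hq_cont[OF PM PN X Y nzX])
  have hnz: "hh x \<noteq> 0" for x unfolding hh using nzX nzY by simp
  have h0: "hh 0 = 1" unfolding hh using cfr_0[OF PM] cfr_0[OF PN] by simp
  have hom: "hh (k+l) = hh k * hh l" for k l
  proof (rule bimult_hom[OF hc hnz h0 d3])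
    fix \<epsilon> :: real assume "\<epsilon> > 0"
    then show "\<exists>m0. \<forall>m\<ge>m0. \<forall>k\<in>{0..1}. norm (hh (k + 2*pi*fact m) / (hh k * hh (2*pi*fact m)) - 1) < \<epsilon>"
      unfolding hh by (rule uniform_U[OF PM PN X Y nzX nzY])
  qed
  show ?thesis by (rule final[OF PM PN X Y nzX]) (use hom in \<open>simp add: hh\<close>)
qed

theorem theorem4p3:
  fixes M :: "'a measure" and N :: "'b measure"
    and \<xi> :: "nat \<Rightarrow> 'a \<Rightarrow> rat" and \<eta> :: "nat \<Rightarrow> 'b \<Rightarrow> rat"
    and a2 a3 b2 b3 :: rat
  assumes nz: "a2 \<noteq> 0" "a3 \<noteq> 0" "b2 \<noteq> 0" "b3 \<noteq> 0"
    and xi: "admissible4 M \<xi>"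
    and eta: "admissible4 N \<eta>"
    and joint: "distr N (count_space UNIV)
                   (\<lambda>\<omega>. (\<eta> 1 \<omega> + a2 * \<eta> 2 \<omega> + a3 * \<eta> 3 \<omega>, b2 * \<eta> 2 \<omega> + b3 * \<eta> 3 \<omega> + \<eta> 4 \<omega>))
              = distr M (count_space UNIV)
                   (\<lambda>\<omega>. (\<xi> 1 \<omega> + a2 * \<xi> 2 \<omega> + a3 * \<xi> 3 \<omega>, b2 * \<xi> 2 \<omega> + b3 * \<xi> 3 \<omega> + \<xi> 4 \<omega>))"
  shows "(a2 * b3 \<noteq> a3 * b2 \<longrightarrow>
            (\<exists>\<alpha> :: nat \<Rightarrow> rat. \<forall>j\<in>{1..4}.
               distr N (count_space UNIV) (\<eta> j) = distr M (count_space UNIV) (\<lambda>\<omega>. \<xi> j \<omega> + \<alpha> j)))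
       \<and> ((a2 * b3 = a3 * b2 \<and>
            distr M (count_space UNIV) (\<xi> 2) = distr M (count_space UNIV) (\<xi> 3) \<and>
            (\<bar>a2\<bar> \<noteq> \<bar>a3\<bar> \<or> a2 = a3) \<and>
            distr N (count_space UNIV) (\<eta> 2) = distr N (count_space UNIV) (\<eta> 3)) \<longrightarrow>
            (\<exists>\<alpha> :: nat \<Rightarrow> rat. \<forall>j\<in>{1..4}.
               distr N (count_space UNIV) (\<eta> j) = distr M (count_space UNIV) (\<lambda>\<omega>. \<xi> j \<omega> + \<alpha> j)))"
proof -
  have PM: "prob_space M" using xi by (rule adm_prob)
  have PN: "prob_space N" using eta by (rule adm_prob)
  have mX: "\<xi> j \<in> measurable M (count_space UNIV)" if "j \<in> {1..4}" for j using adm_meas[OF xi that] .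
  have mY: "\<eta> j \<in> measurable N (count_space UNIV)" if "j \<in> {1..4}" for j using adm_meas[OF eta that] .
  have nX: "cfr M (\<xi> j) t \<noteq> 0" if "j \<in> {1..4}" for j t using adm_nz[OF xi that] .
  have nY: "cfr N (\<eta> j) t \<noteq> 0" if "j \<in> {1..4}" for j t using adm_nz[OF eta that] .
  define A2 where "A2 = real_of_rat a2"
  define A3 where "A3 = real_of_rat a3"
  define B2 where "B2 = real_of_rat b2"
  define B3 where "B3 = real_of_rat b3"
  have nzR: "A2 \<noteq> 0" "A3 \<noteq> 0" "B2 \<noteq> 0" "B3 \<noteq> 0" using nz unfolding A2_def A3_def B2_def B3_def by simp_all
  define h where "h j t = cfr N (\<eta> j) t / cfr M (\<xi> j) t" for j t
  have FE: "h 1 x * h 2 (A2*x + B2*y) * h 3 (A3*x + B3*y) * h 4 y = 1" for x y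
    using funeq[OF xi eta joint, of x y] unfolding h_def A2_def A3_def B2_def B3_def .
  have fin: "\<exists>\<alpha>. distr N (count_space UNIV) (\<eta> j) = distr M (count_space UNIV) (\<lambda>\<omega>. \<xi> j \<omega> + \<alpha>)"
    if j: "j \<in> {1..4}" and hom: "\<And>k l. h j (k+l) = h j k * h j l" for j
    by (rule final[OF PM PN mX[OF j] mY[OF j] nX[OF j]]) (use hom in \<open>simp add: h_def\<close>)
  have cI: "\<exists>\<alpha>. distr N (count_space UNIV) (\<eta> j) = distr M (count_space UNIV) (\<lambda>\<omega>. \<xi> j \<omega> + \<alpha>)"
    if j: "j \<in> {1..4}" and d3: "\<And>k l m. h j (k+l+m) * h j k * h j l * h j m = h j (k+l) * h j (k+m) * h j (l+m) * h j 0" for j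
    by (rule caseI_j[OF PM PN mX[OF j] mY[OF j] nX[OF j] nY[OF j] _ d3]) (simp add: h_def fun_eq_iff)
  have choose: "\<exists>\<alpha> :: nat \<Rightarrow> rat. \<forall>j\<in>{1..4}. distr N (count_space UNIV) (\<eta> j) = distr M (count_space UNIV) (\<lambda>\<omega>. \<xi> j \<omega> + \<alpha> j)"
    if "\<And>j. j \<in> {1..4} \<Longrightarrow> \<exists>\<alpha>. distr N (count_space UNIV) (\<eta> j) = distr M (count_space UNIV) (\<lambda>\<omega>. \<xi> j \<omega> + \<alpha>)"
    using that by (intro bchoice ballI) blast
  show ?thesis
  proof (intro conjI impI)
    assume det: "a2 * b3 \<noteq> a3 * b2"
    have detR: "A2 * B3 - A3 * B2 \<noteq> 0" using det unfolding A2_def A3_def B2_def B3_def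
      by (metis eq_iff_diff_eq_0 of_rat_eq_iff of_rat_mult)
    show "\<exists>\<alpha> :: nat \<Rightarrow> rat. \<forall>j\<in>{1..4}. distr N (count_space UNIV) (\<eta> j) = distr M (count_space UNIV) (\<lambda>\<omega>. \<xi> j \<omega> + \<alpha> j)"
    proof (rule choose)
      fix j :: nat assume j: "j \<in> {1..4}"
      then have "j = 1 \<or> j = 2 \<or> j = 3 \<or> j = 4" by auto
      then show "\<exists>\<alpha>. distr N (count_space UNIV) (\<eta> j) = distr M (count_space UNIV) (\<lambda>\<omega>. \<xi> j \<omega> + \<alpha>)"
      proof (elim disjE)
        assume "j = 1"
        moreover have "h 1 (k+l+m) * h 1 k * h 1 l * h 1 m = h 1 (k+l) * h 1 (k+m) * h 1 (l+m) * h 1 0" for k l m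
          by (rule cube_w[where Ha="h 1" and pa=1 and qa=0 and Hb="h 2" and pb=A2 and qb=B2
                and Hc="h 3" and pc=A3 and qc=B3 and Hd="h 4" and pd=0 and qd=1])
             (use FE nzR in auto)
        ultimately show ?thesis using cI[of 1] by simp
      next
        assume "j = 2"
        moreover have "h 2 (k+l+m) * h 2 k * h 2 l * h 2 m = h 2 (k+l) * h 2 (k+m) * h 2 (l+m) * h 2 0" for k l m
          by (rule cube_w[where Ha="h 2" and pa=A2 and qa=B2 and Hb="h 1" and pb=1 and qb=0
                and Hc="h 3" and pc=A3 and qc=B3 and Hd="h 4" and pd=0 and qd=1])
             (use FE nzR detR in \<open>auto simp: mult_ac\<close>)
        ultimately show ?thesis using cI[of 2] by simp
      next
        assume "j = 3"
        moreover have "h 3 (k+l+m) * h 3 k * h 3 l * h 3 m = h 3 (k+l) * h 3 (k+m) * h 3 (l+m) * h 3 0" for k l m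
        proof (rule cube_w[where Ha="h 3" and pa=A3 and qa=B3 and Hb="h 1" and pb=1 and qb=0
                and Hc="h 2" and pc=A2 and qc=B2 and Hd="h 4" and pd=0 and qd=1])
          show "A3 * B2 - A2 * B3 \<noteq> 0" using detR by (simp add: algebra_simps)
        qed (use FE nzR in \<open>auto simp: mult_ac\<close>)
        ultimately show ?thesis using cI[of 3] by simp
      next
        assume "j = 4"
        moreover have "h 4 (k+l+m) * h 4 k * h 4 l * h 4 m = h 4 (k+l) * h 4 (k+m) * h 4 (l+m) * h 4 0" for k l m
          by (rule cube_w[where Ha="h 4" and pa=0 and qa=1 and Hb="h 1" and pb=1 and qb=0
                and Hc="h 2" and pc=A2 and qc=B2 and Hd="h 3" and pd=A3 and qd=B3])
             (use FE nzR in \<open>auto simp: mult_ac\<close>)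
        ultimately show ?thesis using cI[of 4] by simp
      qed
    qed
  next
    assume H: "a2 * b3 = a3 * b2 \<and>
            distr M (count_space UNIV) (\<xi> 2) = distr M (count_space UNIV) (\<xi> 3) \<and>
            (\<bar>a2\<bar> \<noteq> \<bar>a3\<bar> \<or> a2 = a3) \<and>
            distr N (count_space UNIV) (\<eta> 2) = distr N (count_space UNIV) (\<eta> 3)"
    have c3X: "cfr M (\<xi> 3) = cfr M (\<xi> 2)" using cfr_distr[OF mX mX, of 3 2] H by simp
    have c3Y: "cfr N (\<eta> 3) = cfr N (\<eta> 2)" using cfr_distr[OF mY mY, of 3 2] H by simp
    have h32: "h 3 = h 2" unfolding h_def[abs_def] c3X c3Y ..
    define r where "r = A3 / A2"
    have B3r: "B3 = r * B2"
    proof -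
      have "A2 * B3 = A3 * B2" using H unfolding A2_def A3_def B2_def B3_def by (metis of_rat_mult)
      then show ?thesis unfolding r_def using nzR by (simp add: field_simps)
    qed
    have lin: "A3*x + B3*y = r * (A2*x + B2*y)" for x y unfolding B3r r_def using nzR by (simp add: field_simps)
    define HH where "HH t = h 2 t * h 2 (r*t)" for t
    have FE2: "h 1 (1*x + 0*y) * HH (A2*x + B2*y) * h 4 (0*x + 1*y) = 1" for x y
      using FE[of x y] unfolding HH_def h32 lin by (simp add: mult_ac)
    have h0: "h j 0 = 1" if "j \<in> {1..4}" for j unfolding h_def using cfr_0[OF PM] cfr_0[OF PN] by simp
    have hnz: "h j x \<noteq> 0" if "j \<in> {1..4}" for j x unfolding h_def using nX[OF that] nY[OF that] by simp
    have hom1: "h 1 (k+l) = h 1 k * h 1 l" for k l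
      using square_w[where Ha="h 1" and pa=1 and qa=0 and Hb=HH and pb=A2 and qb=B2 and Hc="h 4" and pc=0 and qc=1, OF FE2]
        nzR h0[of 1] by simp
    have hom4: "h 4 (k+l) = h 4 k * h 4 l" for k l
      using square_w[where Ha="h 4" and pa=0 and qa=1 and Hb="h 1" and pb=1 and qb=0 and Hc=HH and pc=A2 and qc=B2]
        FE2 nzR h0[of 4] by (simp add: mult_ac)
    have HHhom: "HH (k+l) * HH 0 = HH k * HH l" for k l
      using square_w[where Ha=HH and pa=A2 and qa=B2 and Hb="h 1" and pb=1 and qb=0 and Hc="h 4" and pc=0 and qc=1]
        FE2 nzR by (simp add: mult_ac)
    have HH0: "HH 0 = 1" unfolding HH_def using h0[of 2] by simp
    have rcond: "\<bar>r\<bar> \<noteq> 1 \<or> r = 1"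
    proof (cases "a2 = a3")
      case True then show ?thesis unfolding r_def A2_def A3_def using nz by simp
    next
      case False
      then have "\<bar>a2\<bar> \<noteq> \<bar>a3\<bar>" using H by simp
      then have "\<bar>A2\<bar> \<noteq> \<bar>A3\<bar>" unfolding A2_def A3_def by (metis abs_of_rat of_rat_eq_iff)
      then show ?thesis unfolding r_def using nzR by (auto simp: abs_divide)
    qed
    have hc2: "continuous_on UNIV (h 2)" unfolding h_def[abs_def]
      by (rule hq_cont[OF PM PN mX mY nX]) auto
    have hom2: "h 2 (k+l) = h 2 k * h 2 l" for k l
    proof (rule root_hom[OF hc2 h0 hnz _ rcond])
      fix k l show "h 2 (k+l) * h 2 (r*(k+l)) = (h 2 k * h 2 (r*k)) * (h 2 l * h 2 (r*l))"
        using HHhom[of k l] HH0 unfolding HH_def by simp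
    qed auto
    have hom3: "h 3 (k+l) = h 3 k * h 3 l" for k l using hom2 h32 by simp
    show "\<exists>\<alpha> :: nat \<Rightarrow> rat. \<forall>j\<in>{1..4}. distr N (count_space UNIV) (\<eta> j) = distr M (count_space UNIV) (\<lambda>\<omega>. \<xi> j \<omega> + \<alpha> j)"
    proof (rule choose)
      fix j :: nat assume j: "j \<in> {1..4}"
      then have "j = 1 \<or> j = 2 \<or> j = 3 \<or> j = 4" by auto
      then show "\<exists>\<alpha>. distr N (count_space UNIV) (\<eta> j) = distr M (count_space UNIV) (\<lambda>\<omega>. \<xi> j \<omega> + \<alpha>)"
        using fin[of 1, OF _ hom1] fin[of 2, OF _ hom2] fin[of 3, OF _ hom3] fin[of 4, OF _ hom4] by auto
    qed
  qed
qed


end
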